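(* Let $(V,c)$ be a braided vector space, i.e. $V$ a finite-dimensional complex vector space and $c\in GL(V\otimes V)$ satisfying $(c\otimes \mathrm{Id}_V)(\mathrm{Id}_V\otimes c)(c\otimes \mathrm{Id}_V)=(\mathrm{Id}_V\otimes c)(c\otimes \mathrm{Id}_V)(\mathrm{Id}_V\otimes c)$. Then $(V,c)$ is both of left group-type and of right group-type if and only if $(V,c)$ is diagonalizable.
   Context: $(V,c)$ is of left group-type if there are an ordered basis $[x_1,\ldots,x_n]$ of $V$ and $g_i\in GL(V)$ with $c(x_i\otimes z)=g_i(z)\otimes x_i$ for all $i$ and $z\in V$; it is of right group-type if there are an ordered basis $[x_1,\ldots,x_n]$ of $V$ and $g_j\in GL(V)$ with $c(z\otimes x_j)=x_j\otimes g_j(z)$ for all $j$ and $z\in V$ (the bases for left and right need not coincide). $(V,c)$ is of diagonal type with respect to a basis $[x_1,\ldots,x_n]$ if $c(x_i\otimes x_j)=q_{ij}\,x_j\otimes x_i$ for some scalars $q_{ij}$, and it is diagonalizable if there exists a basis of $V$ with respect to which it is of diagonal type. *)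

theory Defs
  imports "HOL-Analysis.Analysis"
begin

text \<open>V is modelled as complex^'n (finite-dimensional complex vector space of
dimension CARD('n)), V\<otimes>V as complex^('n\<times>'n), V\<otimes>V\<otimes>V as complex^('n\<times>'n\<times>'n).\<close>

definition tensor :: "complex^'n::finite \<Rightarrow> complex^'n \<Rightarrow> complex^('n \<times> 'n)" where
  "tensor x y = (\<chi> p. x $ fst p * y $ snd p)"

definition tensor_id :: "complex^('n::finite\<times>'n)^('n\<times>'n) \<Rightarrow> complex^('n\<times>'n\<times>'n)^('n\<times>'n\<times>'n)" where
  "tensor_id C = (\<chi> p q. C $ (fst p, fst (snd p)) $ (fst q, fst (snd q))
                     * (if snd (snd p) = snd (snd q) then 1 else 0))"

definition id_tensor :: "complex^('n::finite\<times>'n)^('n\<times>'n) \<Rightarrow> complex^('n\<times>'n\<times>'n)^('n\<times>'n\<times>'n)" where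
  "id_tensor C = (\<chi> p q. (if fst p = fst q then 1 else 0) * C $ snd p $ snd q)"

definition braided :: "complex^('n::finite\<times>'n)^('n\<times>'n) \<Rightarrow> bool" where
  "braided C \<longleftrightarrow> invertible C \<and>
     tensor_id C ** id_tensor C ** tensor_id C = id_tensor C ** tensor_id C ** id_tensor C"

text \<open>An ordered basis of V indexed by 'n (a basis of V has exactly CARD('n) elements).\<close>
definition ordered_basis :: "('n::finite \<Rightarrow> complex^'n) \<Rightarrow> bool" where
  "ordered_basis x \<longleftrightarrow> inj x \<and> vec.independent (range x) \<and> vec.span (range x) = UNIV"

definition left_group_type :: "complex^('n::finite\<times>'n)^('n\<times>'n) \<Rightarrow> bool" where
  "left_group_type C \<longleftrightarrow> (\<exists>x g. ordered_basis x \<and> (\<forall>i. invertible (g i :: complex^'n^'n)) \<and>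
     (\<forall>i z. C *v tensor (x i) z = tensor (g i *v z) (x i)))"

definition right_group_type :: "complex^('n::finite\<times>'n)^('n\<times>'n) \<Rightarrow> bool" where
  "right_group_type C \<longleftrightarrow> (\<exists>x g. ordered_basis x \<and> (\<forall>j. invertible (g j :: complex^'n^'n)) \<and>
     (\<forall>j z. C *v tensor z (x j) = tensor (x j) (g j *v z)))"

definition diagonal_type_wrt :: "complex^('n::finite\<times>'n)^('n\<times>'n) \<Rightarrow> ('n \<Rightarrow> complex^'n) \<Rightarrow> bool" where
  "diagonal_type_wrt C x \<longleftrightarrow> (\<exists>q :: 'n \<Rightarrow> 'n \<Rightarrow> complex.
     \<forall>i j. C *v tensor (x i) (x j) = q i j *s tensor (x j) (x i))"

definition diagonalizable_braiding :: "complex^('n::finite\<times>'n)^('n\<times>'n) \<Rightarrow> bool" where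
  "diagonalizable_braiding C \<longleftrightarrow> (\<exists>x. ordered_basis x \<and> diagonal_type_wrt C x)"

end

theory Submission
  imports Defs
begin


lemma ob_span:
  fixes x :: "'n::finite \<Rightarrow> complex^'n"
  assumes "ordered_basis x" "vec.subspace S" "\<And>m. x m \<in> S"
  shows "v \<in> S"
proof -
  have "vec.span (range x) \<subseteq> S" using assms(2,3) by (intro vec.span_minimal) auto
  with assms(1) show ?thesis unfolding ordered_basis_def by auto
qed

lemma ob_sum_reindex:
  fixes x :: "'n::finite \<Rightarrow> complex^'n"
  assumes "inj x"
  shows "(\<Sum>v\<in>range x. c v *s v) = (\<Sum>m\<in>UNIV. c (x m) *s x m)"
  using assms by (simp add: sum.reindex)

lemma ob_sum:
  fixes x :: "'n::finite \<Rightarrow> complex^'n"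
  assumes "ordered_basis x"
  shows "\<exists>a. v = (\<Sum>m\<in>UNIV. a m *s x m)"
proof -
  have "v \<in> vec.span (range x)" using assms unfolding ordered_basis_def by auto
  then obtain c where "v = (\<Sum>u\<in>range x. c u *s u)"
    using vec.span_finite[of "range x"] by auto
  then show ?thesis using assms ob_sum_reindex[of x c] unfolding ordered_basis_def by auto
qed

lemma ob_indep:
  fixes x :: "'n::finite \<Rightarrow> complex^'n"
  assumes "ordered_basis x" "(\<Sum>m\<in>UNIV. a m *s x m) = 0"
  shows "a m = 0"
proof -
  have inj: "inj x" and ind: "vec.independent (range x)" using assms unfolding ordered_basis_def by auto
  have "(\<Sum>v\<in>range x. (a \<circ> inv x) v *s v) = 0"
    using assms(2) ob_sum_reindex[OF inj, of "a \<circ> inv x"] inj by simp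
  then have "(a \<circ> inv x) (x m) = 0" using ind unfolding vec.independent_explicit by blast
  then show ?thesis using inj by simp
qed

lemma ob_matrix:
  fixes x :: "'n::finite \<Rightarrow> complex^'n"
  assumes "ordered_basis x"
  shows "\<exists>M::complex^'n^'n. \<forall>m. M *v x m = f m"
proof -
  have inj: "inj x" and ind: "vec.independent (range x)" using assms unfolding ordered_basis_def by auto
  let ?g = "vec.construct (range x) (\<lambda>v. f (inv x v))"
  have lin: "Vector_Spaces.linear (*s) (*s) ?g" using vec.linear_construct[OF ind] .
  have "matrix ?g *v x m = f m" for m
    using matrix_works[OF lin] vec.construct_basis[OF ind, of "x m" "\<lambda>v. f (inv x v)"] inj by simp
  then show ?thesis by blast
qed

lemma ob_matrix_eq:
  fixes x :: "'n::finite \<Rightarrow> complex^'n" and A B :: "complex^'n^'n"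
  assumes "ordered_basis x" "\<And>m. A *v x m = B *v x m"
  shows "A = B"
proof -
  have "vec.subspace {v. A *v v = B *v v}"
    by (auto simp: vec.subspace_def matrix_vector_right_distrib vec.scale)
  then have "A *v v = B *v v" for v using ob_span[OF assms(1)] assms(2) by blast
  then show ?thesis by (simp add: matrix_eq)
qed

lemma tensor_add_left: "tensor (a + b) c = tensor a c + tensor b c"
  by (simp add: tensor_def vec_eq_iff algebra_simps)
lemma tensor_add_right: "tensor c (a + b) = tensor c a + tensor c b"
  by (simp add: tensor_def vec_eq_iff algebra_simps)
lemma tensor_scale_left: "tensor (t *s a) c = t *s tensor a c"
  by (simp add: tensor_def vec_eq_iff algebra_simps)
lemma tensor_scale_right: "tensor c (t *s a) = t *s tensor c a"
  by (simp add: tensor_def vec_eq_iff algebra_simps)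
lemma tensor_zero_left[simp]: "tensor 0 c = 0"
  by (simp add: tensor_def vec_eq_iff)
lemma tensor_zero_right[simp]: "tensor c 0 = 0"
  by (simp add: tensor_def vec_eq_iff)
lemma tensor_sum_left: "tensor (\<Sum>m\<in>S. f m) c = (\<Sum>m\<in>S. tensor (f m) c)"
  by (induction S rule: infinite_finite_induct) (auto simp: tensor_add_left)
lemma tensor_sum_right: "tensor c (\<Sum>m\<in>S. f m) = (\<Sum>m\<in>S. tensor c (f m))"
  by (induction S rule: infinite_finite_induct) (auto simp: tensor_add_right)

lemma tensor_nz: "a \<noteq> 0 \<Longrightarrow> b \<noteq> 0 \<Longrightarrow> tensor a b \<noteq> 0"
proof
  assume "a \<noteq> 0" "b \<noteq> 0" "tensor a b = 0"
  then obtain p q where "a $ p \<noteq> 0" "b $ q \<noteq> 0" by (metis vec_eq_iff zero_index)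
  moreover have "tensor a b $ (p, q) = 0" using \<open>tensor a b = 0\<close> by simp
  ultimately show False by (simp add: tensor_def)
qed

lemma tensor_eq:
  assumes "tensor a b = tensor c d" "b \<noteq> 0"
  shows "\<exists>t. a = t *s c"
proof -
  obtain q where q: "b $ q \<noteq> 0" using assms(2) by (metis vec_eq_iff zero_index)
  have "a $ p * b $ q = c $ p * d $ q" for p
    using arg_cong[OF assms(1), of "\<lambda>T. T $ (p, q)"] by (simp add: tensor_def)
  then have "a $ p = (d $ q / b $ q) * c $ p" for p using q by (simp add: field_simps)
  then have "a = (d $ q / b $ q) *s c" by (auto simp: vec_eq_iff)
  then show ?thesis by blast
qed

lemma tensor_indep:
  fixes x :: "'n::finite \<Rightarrow> complex^'n"
  assumes "ordered_basis x" "(\<Sum>m\<in>UNIV. tensor (b m) (x m)) = 0"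
  shows "b m = 0"
proof -
  have "b m $ p = 0" for p
  proof -
    have "(\<Sum>m\<in>UNIV. (b m $ p) *s x m) = 0"
    proof (rule vec_eq_iff[THEN iffD2], intro allI)
      fix q
      show "(\<Sum>m\<in>UNIV. (b m $ p) *s x m) $ q = 0 $ q"
        using arg_cong[OF assms(2), of "\<lambda>T. T $ (p, q)"] by (simp add: tensor_def sum_component)
    qed
    then show ?thesis using ob_indep[OF assms(1), of "\<lambda>m. b m $ p"] by blast
  qed
  then show ?thesis by (simp add: vec_eq_iff)
qed



definition tL :: "complex^('n::finite\<times>'n) \<Rightarrow> complex^'n \<Rightarrow> complex^('n\<times>'n\<times>'n)" where
  "tL T c = (\<chi> p. T $ (fst p, fst (snd p)) * c $ snd (snd p))"
definition tR :: "complex^'n::finite \<Rightarrow> complex^('n\<times>'n) \<Rightarrow> complex^('n\<times>'n\<times>'n)" where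
  "tR a T = (\<chi> p. a $ fst p * T $ snd p)"

lemma sum3L:
  fixes f :: "'n::finite\<times>'n\<times>'n \<Rightarrow> complex"
  shows "(\<Sum>q\<in>UNIV. f q) = (\<Sum>r\<in>UNIV. \<Sum>c\<in>UNIV. f (fst r, snd r, c))"
proof -
  have b: "bij_betw (\<lambda>(r::'n\<times>'n, c::'n). (fst r, snd r, c)) UNIV UNIV"
    by (rule bij_betwI') (auto simp: case_prod_beta)
  have "(\<Sum>q\<in>UNIV. f q) = (\<Sum>rc\<in>UNIV. f ((\<lambda>(r::'n\<times>'n, c::'n). (fst r, snd r, c)) rc))"
    using sum.reindex_bij_betw[OF b, of f] by simp
  also have "\<dots> = (\<Sum>rc\<in>UNIV \<times> UNIV. f (fst (fst rc), snd (fst rc), snd rc))"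
    by (intro sum.cong) (auto simp: case_prod_beta)
  also have "\<dots> = (\<Sum>r\<in>UNIV. \<Sum>c\<in>UNIV. f (fst r, snd r, c))"
    by (subst sum.cartesian_product') simp
  finally show ?thesis .
qed

lemma sum3R:
  fixes f :: "'n::finite\<times>'n\<times>'n \<Rightarrow> complex"
  shows "(\<Sum>q\<in>UNIV. f q) = (\<Sum>a\<in>UNIV. \<Sum>r\<in>UNIV. f (a, r))"
proof -
  have "(\<Sum>q\<in>UNIV. f q) = (\<Sum>q\<in>UNIV \<times> UNIV. f q)" by simp
  also have "\<dots> = (\<Sum>a\<in>UNIV. \<Sum>r\<in>UNIV. f (a, r))" by (subst sum.cartesian_product') simp
  finally show ?thesis .
qed

lemma delta_sum1:
  fixes f :: "'n::finite \<Rightarrow> complex"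
  shows "(\<Sum>d\<in>UNIV. A * (if e = d then 1 else 0) * f d) = A * f e"
proof -
  have "(\<Sum>d\<in>UNIV. A * (if e = d then 1 else 0) * f d) = (\<Sum>d\<in>UNIV. if e = d then A * f d else 0)"
    by (intro sum.cong) auto
  then show ?thesis by simp
qed

lemma delta_sum2:
  fixes f :: "'n::finite \<Rightarrow> complex"
  shows "(\<Sum>d\<in>UNIV. (if e = d then 1 else 0) * f d) = f e"
proof -
  have "(\<Sum>d\<in>UNIV. (if e = d then 1 else 0) * f d) = (\<Sum>d\<in>UNIV. if e = d then f d else 0)"
    by (intro sum.cong) auto
  then show ?thesis by simp
qed

lemma tensor_id_tL:
  fixes C :: "complex^('n::finite\<times>'n)^('n\<times>'n)"
  shows "tensor_id C *v tL T c = tL (C *v T) c"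
proof (rule vec_eq_iff[THEN iffD2], intro allI)
  fix p :: "'n\<times>'n\<times>'n"
  have "(tensor_id C *v tL T c) $ p =
     (\<Sum>q\<in>UNIV. C $ (fst p, fst (snd p)) $ (fst q, fst (snd q)) * (if snd (snd p) = snd (snd q) then 1 else 0) * (T $ (fst q, fst (snd q)) * c $ snd (snd q)))"
    by (simp add: matrix_vector_mult_def tensor_id_def tL_def)
  also have "\<dots> = (\<Sum>r\<in>UNIV. \<Sum>d\<in>UNIV. C $ (fst p, fst (snd p)) $ r * (if snd (snd p) = d then 1 else 0) * (T $ r * c $ d))"
    by (subst sum3L) simp
  also have "\<dots> = (\<Sum>r\<in>UNIV. C $ (fst p, fst (snd p)) $ r * (T $ r * c $ snd (snd p)))"
    by (intro sum.cong refl) (rule delta_sum1)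
  also have "\<dots> = tL (C *v T) c $ p"
    by (simp add: matrix_vector_mult_def tL_def sum_distrib_right mult.assoc)
  finally show "(tensor_id C *v tL T c) $ p = tL (C *v T) c $ p" .
qed

lemma id_tensor_tR:
  fixes C :: "complex^('n::finite\<times>'n)^('n\<times>'n)"
  shows "id_tensor C *v tR a T = tR a (C *v T)"
proof (rule vec_eq_iff[THEN iffD2], intro allI)
  fix p :: "'n\<times>'n\<times>'n"
  have "(id_tensor C *v tR a T) $ p =
     (\<Sum>q\<in>UNIV. (if fst p = fst q then 1 else 0) * C $ snd p $ snd q * (a $ fst q * T $ snd q))"
    by (simp add: matrix_vector_mult_def id_tensor_def tR_def)
  also have "\<dots> = (\<Sum>d\<in>UNIV. \<Sum>r\<in>UNIV. (if fst p = d then 1 else 0) * C $ snd p $ r * (a $ d * T $ r))"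
    by (subst sum3R) simp
  also have "\<dots> = (\<Sum>r\<in>UNIV. \<Sum>d\<in>UNIV. (if fst p = d then 1 else 0) * (C $ snd p $ r * (a $ d * T $ r)))"
    by (subst sum.swap) (simp add: mult.assoc)
  also have "\<dots> = (\<Sum>r\<in>UNIV. C $ snd p $ r * (a $ fst p * T $ r))"
    by (intro sum.cong refl) (rule delta_sum2)
  also have "\<dots> = tR a (C *v T) $ p"
    by (simp add: matrix_vector_mult_def tR_def sum_distrib_left algebra_simps)
  finally show "(id_tensor C *v tR a T) $ p = tR a (C *v T) $ p" .
qed

lemma tL_tR: "tL (tensor a b) c = tR a (tensor b c)"
  by (simp add: tL_def tR_def tensor_def vec_eq_iff mult.assoc)

lemma tL_cancel:
  assumes "tL T c = tL T' c" "c \<noteq> 0" shows "T = T'"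
proof -
  obtain q where q: "c $ q \<noteq> 0" using assms(2) by (metis vec_eq_iff zero_index)
  have "T $ r = T' $ r" for r
    using arg_cong[OF assms(1), of "\<lambda>v. v $ (fst r, snd r, q)"] q by (simp add: tL_def)
  then show ?thesis by (simp add: vec_eq_iff)
qed



lemma mv_scale: "(A::complex^'m^'n) *v (c *s v) = c *s (A *v v)"
  by (simp add: vec_eq_iff matrix_vector_mult_def sum_distrib_left algebra_simps)

lemma ob_nz: "ordered_basis x \<Longrightarrow> x m \<noteq> 0"
  unfolding ordered_basis_def using vec.dependent_zero[of "range x"] by (metis rangeI)

lemma inv_inj:
  fixes C :: "complex^'n::finite^'n"
  assumes "invertible C" "C *v v = 0" shows "v = 0"
proof -
  obtain B where "B ** C = mat 1" using assms(1) invertible_left_inverse by blast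
  then have "v = B *v (C *v v)" by (simp add: matrix_vector_mul_assoc)
  then show ?thesis using assms(2) by simp
qed

lemma subspace_left:
  fixes C :: "complex^('n::finite\<times>'n)^('n\<times>'n)"
  shows "vec.subspace {z. C *v tensor a z = tensor (G *v z) a}"
  by (auto simp: vec.subspace_def tensor_add_right tensor_add_left matrix_vector_right_distrib
      tensor_scale_right tensor_scale_left mv_scale)

lemma subspace_right:
  fixes C :: "complex^('n::finite\<times>'n)^('n\<times>'n)"
  shows "vec.subspace {z. C *v tensor z a = tensor a (G *v z)}"
  by (auto simp: vec.subspace_def tensor_add_right tensor_add_left matrix_vector_right_distrib
      tensor_scale_right tensor_scale_left mv_scale)

lemma diag_q_nz:
  fixes C :: "complex^('n::finite\<times>'n)^('n\<times>'n)"
  assumes "invertible C" "ordered_basis x"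
    "\<forall>i j. C *v tensor (x i) (x j) = q i j *s tensor (x j) (x i)"
  shows "q i j \<noteq> 0"
proof
  assume "q i j = 0"
  then have "C *v tensor (x i) (x j) = 0" using assms(3) by simp
  then have "tensor (x i) (x j) = 0" using inv_inj[OF assms(1)] by blast
  then show False using tensor_nz ob_nz[OF assms(2)] by blast
qed

lemma diag_matrices:
  fixes x :: "'n::finite \<Rightarrow> complex^'n" and q :: "'n \<Rightarrow> 'n \<Rightarrow> complex"
  assumes "ordered_basis x" "\<And>i j. q i j \<noteq> 0"
  shows "\<exists>g. (\<forall>i. invertible (g i :: complex^'n^'n)) \<and> (\<forall>i j. g i *v x j = q i j *s x j)"
proof -
  have "\<exists>M::complex^'n^'n. \<forall>m. M *v x m = q i m *s x m" for i by (rule ob_matrix[OF assms(1)])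
  then have "\<forall>i. \<exists>M::complex^'n^'n. \<forall>m. M *v x m = q i m *s x m" by blast
  then obtain g where g: "\<forall>i m. g i *v x m = q i m *s x m" by metis
  have "\<exists>M::complex^'n^'n. \<forall>m. M *v x m = (1 / q i m) *s x m" for i by (rule ob_matrix[OF assms(1)])
  then have "\<forall>i. \<exists>M::complex^'n^'n. \<forall>m. M *v x m = (1 / q i m) *s x m" by blast
  then obtain h where h: "\<forall>i m. h i *v x m = (1 / q i m) *s x m" by metis
  have "g i ** h i = mat 1" for i
  proof (rule ob_matrix_eq[OF assms(1)])
    fix m
    have "(g i ** h i) *v x m = g i *v (h i *v x m)" by (simp add: matrix_vector_mul_assoc)
    also have "\<dots> = x m" using g h assms(2)[of i m] by (simp add: mv_scale)
    finally show "(g i ** h i) *v x m = mat 1 *v x m" by simp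
  qed
  then have "invertible (g i)" for i using invertible_right_inverse by blast
  with g show ?thesis by blast
qed

lemma diag_imp_left:
  fixes C :: "complex^('n::finite\<times>'n)^('n\<times>'n)"
  assumes "invertible C" "ordered_basis x"
    "\<forall>i j. C *v tensor (x i) (x j) = q i j *s tensor (x j) (x i)"
  shows "left_group_type C"
proof -
  obtain g where g: "\<forall>i. invertible (g i :: complex^'n^'n)" "\<forall>i j. g i *v x j = q i j *s x j"
    using diag_matrices[OF assms(2), of q] diag_q_nz[OF assms] by blast
  have "C *v tensor (x i) z = tensor (g i *v z) (x i)" for i z
  proof (rule ob_span[OF assms(2) subspace_left, simplified])
    fix m show "C *v tensor (x i) (x m) = tensor (g i *v x m) (x i)"
      using assms(3) g(2) by (simp add: tensor_scale_left)
  qed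
  then show ?thesis unfolding left_group_type_def using assms(2) g(1) by blast
qed

lemma diag_imp_right:
  fixes C :: "complex^('n::finite\<times>'n)^('n\<times>'n)"
  assumes "invertible C" "ordered_basis x"
    "\<forall>i j. C *v tensor (x i) (x j) = q i j *s tensor (x j) (x i)"
  shows "right_group_type C"
proof -
  obtain g where g: "\<forall>j. invertible (g j :: complex^'n^'n)" "\<forall>j i. g j *v x i = q i j *s x i"
    using diag_matrices[OF assms(2), of "\<lambda>j i. q i j"] diag_q_nz[OF assms] by blast
  have "C *v tensor z (x j) = tensor (x j) (g j *v z)" for j z
  proof (rule ob_span[OF assms(2) subspace_right, simplified])
    fix m show "C *v tensor (x m) (x j) = tensor (x j) (g j *v x m)"
      using assms(3) g(2) by (simp add: tensor_scale_right)
  qed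
  then show ?thesis unfolding right_group_type_def using assms(2) g(1) by blast
qed



lemma extract_basis:
  fixes w :: "'b::finite \<Rightarrow> complex^'n::finite"
  assumes "vec.span (range w) = UNIV"
  shows "\<exists>b::'n \<Rightarrow> complex^'n. ordered_basis b \<and> range b \<subseteq> range w"
proof -
  obtain B where B: "B \<subseteq> range w" "vec.independent B" "range w \<subseteq> vec.span B"
    using vec.maximal_independent_subset[of "range w"] by blast
  have sp: "vec.span B = UNIV"
    using vec.span_mono[OF B(3)] assms vec.span_span[of B] by auto
  have "card B = vec.dim (UNIV :: (complex^'n) set)"
    using vec.basis_card_eq_dim[of B UNIV] B(2) sp by auto
  also have "\<dots> = CARD('n)" by (simp add: card_cart_basis)
  finally have cB: "card B = CARD('n)" .
  have fB: "finite B" using vec.finiteI_independent[OF B(2)] .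
  obtain f where f: "bij_betw f (UNIV::'n set) B"
    using finite_same_card_bij[of "UNIV::'n set" B] fB cB by auto
  then have "inj f" "range f = B" by (auto simp: bij_betw_def)
  then have "ordered_basis f" using B(2) sp unfolding ordered_basis_def by auto
  then show ?thesis using \<open>range f = B\<close> B(1) by blast
qed

lemma mv_sum: "(A::complex^'m^'n) *v (\<Sum>i\<in>S. f i) = (\<Sum>i\<in>S. A *v f i)"
  by (induction S rule: infinite_finite_induct) (auto simp: matrix_vector_right_distrib)

lemma subspace_W:
  fixes C :: "complex^('n::finite\<times>'n)^('n\<times>'n)"
  shows "vec.subspace {u. \<forall>w. C *v tensor u w = tensor (G *v w) u}"
  by (auto simp: vec.subspace_def tensor_add_right tensor_add_left matrix_vector_right_distrib
      tensor_scale_right tensor_scale_left mv_scale)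

lemma tensor_diff_left: "tensor (a - b) c = tensor a c - tensor b c"
  by (simp add: tensor_def vec_eq_iff algebra_simps)



context
  fixes C :: "complex^('n::finite\<times>'n)^('n\<times>'n)" and x y :: "'n \<Rightarrow> complex^'n"
    and g h :: "'n \<Rightarrow> complex^'n^'n"
  assumes br: "braided C" and xb: "ordered_basis x" and yb: "ordered_basis y"
    and ginv: "\<forall>i. invertible (g i)"
    and gl: "\<forall>i z. C *v tensor (x i) z = tensor (g i *v z) (x i)"
    and hr: "\<forall>j z. C *v tensor z (y j) = tensor (y j) (h j *v z)"
begin

lemma eig: "\<exists>t. g i *v y j = t *s y j"
proof -
  have "tensor (g i *v y j) (x i) = tensor (y j) (h j *v x i)" using gl hr by metis
  then show ?thesis using tensor_eq ob_nz[OF xb] by blast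
qed

definition lam where "lam i j = (SOME t. g i *v y j = t *s y j)"

lemma eig2: "g i *v y j = lam i j *s y j"
  unfolding lam_def using someI_ex[OF eig] .

lemma gcomm: "g i ** g k = g k ** g i"
proof (rule ob_matrix_eq[OF yb])
  fix m
  show "(g i ** g k) *v y m = (g k ** g i) *v y m"
    by (simp add: matrix_vector_mul_assoc[symmetric] eig2 mv_scale)
qed

lemma braid_step:
  assumes u: "\<forall>w. C *v tensor u w = tensor (g k *v w) u"
  shows "\<forall>w. C *v tensor (g i *v u) w = tensor (g k *v w) (g i *v u)"
proof
  fix w
  let ?A = "tensor_id C" and ?B = "id_tensor C"
  have eq: "?A ** ?B ** ?A = ?B ** ?A ** ?B" using br unfolding braided_def by blast
  have key: "C *v tensor (g i *v u) (g i *v z) = tensor (g k *v (g i *v z)) (g i *v u)" for z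
  proof -
    let ?T = "tL (tensor (x i) u) z"
    have L: "(?A ** ?B ** ?A) *v ?T = tL (C *v tensor (g i *v u) (g i *v z)) (x i)"
    proof -
      have "(?A ** ?B ** ?A) *v ?T = ?A *v (?B *v (?A *v ?T))"
        by (simp add: matrix_vector_mul_assoc[symmetric])
      also have "?A *v ?T = tR (g i *v u) (tensor (x i) z)"
        using gl by (subst tensor_id_tL) (simp add: tL_tR)
      also have "?B *v \<dots> = tL (tensor (g i *v u) (g i *v z)) (x i)"
        using gl by (subst id_tensor_tR) (simp add: tL_tR)
      also have "?A *v \<dots> = tL (C *v tensor (g i *v u) (g i *v z)) (x i)"
        by (simp add: tensor_id_tL)
      finally show ?thesis .
    qed
    have R: "(?B ** ?A ** ?B) *v ?T = tL (tensor (g i *v (g k *v z)) (g i *v u)) (x i)"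
    proof -
      have "(?B ** ?A ** ?B) *v ?T = ?B *v (?A *v (?B *v tR (x i) (tensor u z)))"
        by (simp add: matrix_vector_mul_assoc[symmetric] tL_tR)
      also have "?B *v tR (x i) (tensor u z) = tL (tensor (x i) (g k *v z)) u"
        using u by (subst id_tensor_tR) (simp add: tL_tR)
      also have "?A *v \<dots> = tR (g i *v (g k *v z)) (tensor (x i) u)"
        using gl by (subst tensor_id_tL) (simp add: tL_tR)
      also have "?B *v \<dots> = tL (tensor (g i *v (g k *v z)) (g i *v u)) (x i)"
        using gl by (subst id_tensor_tR) (simp add: tL_tR)
      finally show ?thesis .
    qed
    have "C *v tensor (g i *v u) (g i *v z) = tensor (g i *v (g k *v z)) (g i *v u)"
      using L R eq tL_cancel ob_nz[OF xb] by metis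
    also have "g i *v (g k *v z) = g k *v (g i *v z)"
      by (simp add: matrix_vector_mul_assoc gcomm)
    finally show ?thesis .
  qed
  obtain G where G: "g i ** G = mat 1" using ginv invertible_right_inverse by blast
  have "g i *v (G *v w) = w" by (simp add: matrix_vector_mul_assoc G)
  then show "C *v tensor (g i *v u) w = tensor (g k *v w) (g i *v u)"
    using key[of "G *v w"] by simp
qed

definition P where "P k = (SOME M. \<forall>m. M *v x m = (if g m = g k then x m else 0))"

lemma P_x: "P k *v x m = (if g m = g k then x m else 0)"
proof -
  have "\<exists>M. \<forall>m. M *v x m = (if g m = g k then x m else 0)" by (rule ob_matrix[OF xb])
  from someI_ex[OF this] show ?thesis unfolding P_def by blast
qed

lemma W_coord:
  assumes u: "\<forall>w. C *v tensor u w = tensor (g m *v w) u"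
  shows "P k *v u = (if g m = g k then u else 0)"
proof -
  obtain a where ua: "u = (\<Sum>l\<in>UNIV. a l *s x l)" using ob_sum[OF xb] by blast
  have key: "g l = g m" if al: "a l \<noteq> 0" for l
  proof -
    have "g l *v w = g m *v w" for w
    proof -
      have "C *v tensor u w = (\<Sum>l\<in>UNIV. a l *s tensor (g l *v w) (x l))"
        unfolding ua by (simp add: tensor_sum_left tensor_scale_left mv_sum mv_scale gl)
      moreover have "tensor (g m *v w) u = (\<Sum>l\<in>UNIV. a l *s tensor (g m *v w) (x l))"
        unfolding ua by (simp add: tensor_sum_right tensor_scale_right)
      ultimately have "(\<Sum>l\<in>UNIV. a l *s tensor (g l *v w) (x l)) - (\<Sum>l\<in>UNIV. a l *s tensor (g m *v w) (x l)) = 0"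
        using u by simp
      moreover have "(\<Sum>l\<in>UNIV. tensor (a l *s (g l *v w - g m *v w)) (x l)) =
          (\<Sum>l\<in>UNIV. a l *s tensor (g l *v w) (x l)) - (\<Sum>l\<in>UNIV. a l *s tensor (g m *v w) (x l))"
        by (simp add: sum_subtractf[symmetric] tensor_scale_left tensor_diff_left vector_ssub_ldistrib)
      ultimately have "(\<Sum>l\<in>UNIV. tensor (a l *s (g l *v w - g m *v w)) (x l)) = 0" by simp
      then have "a l *s (g l *v w - g m *v w) = 0"
        using tensor_indep[OF xb, of "\<lambda>l. a l *s (g l *v w - g m *v w)"] by blast
      then show ?thesis using al by simp
    qed
    then show ?thesis by (simp add: matrix_eq)
  qed
  have "P k *v u = (\<Sum>l\<in>UNIV. a l *s (if g l = g k then x l else 0))"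
    unfolding ua by (simp add: mv_sum mv_scale P_x)
  also have "\<dots> = (\<Sum>l\<in>UNIV. a l *s (if g m = g k then x l else 0))"
    using key by (intro sum.cong refl) (metis vector_smult_lzero)
  also have "\<dots> = (if g m = g k then u else 0)"
    unfolding ua by simp
  finally show ?thesis .
qed

lemma P_comm: "g i ** P k = P k ** g i"
proof (rule ob_matrix_eq[OF xb])
  fix m
  have xm: "\<forall>w. C *v tensor (x m) w = tensor (g m *v w) (x m)" using gl by blast
  have "(P k ** g i) *v x m = (if g m = g k then g i *v x m else 0)"
    using W_coord[OF braid_step[OF xm, of i]] by (simp add: matrix_vector_mul_assoc[symmetric])
  then show "(g i ** P k) *v x m = (P k ** g i) *v x m"
    by (simp add: matrix_vector_mul_assoc[symmetric] P_x)
qed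

lemma P_W: "\<forall>w. C *v tensor (P k *v v) w = tensor (g k *v w) (P k *v v)"
proof -
  have sub: "vec.subspace {v. \<forall>w. C *v tensor (P k *v v) w = tensor (g k *v w) (P k *v v)}"
    by (auto simp: vec.subspace_def tensor_add_right tensor_add_left matrix_vector_right_distrib
      tensor_scale_right tensor_scale_left mv_scale)
  have "v \<in> {v. \<forall>w. C *v tensor (P k *v v) w = tensor (g k *v w) (P k *v v)}"
  proof (rule ob_span[OF xb sub])
    fix m
    show "x m \<in> {v. \<forall>w. C *v tensor (P k *v v) w = tensor (g k *v w) (P k *v v)}"
      using gl by (auto simp: P_x)
  qed
  then show ?thesis by simp
qed

definition wv :: "'n \<times> 'n \<Rightarrow> complex^'n" where "wv p = P (fst p) *v y (snd p)"

lemma w_eig: "g i *v wv p = lam i (snd p) *s wv p"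
proof -
  have "g i *v wv p = (g i ** P (fst p)) *v y (snd p)"
    by (simp add: wv_def matrix_vector_mul_assoc)
  also have "\<dots> = P (fst p) *v (g i *v y (snd p))"
    by (simp add: P_comm matrix_vector_mul_assoc)
  also have "\<dots> = lam i (snd p) *s wv p"
    by (simp add: eig2 mv_scale wv_def)
  finally show ?thesis .
qed

lemma w_span: "vec.span (range wv) = UNIV"
proof -
  have "x m \<in> vec.span (range wv)" for m
  proof -
    have sub: "vec.subspace {v. P m *v v \<in> vec.span (range wv)}"
      using vec.subspace_span[of "range wv"]
      by (auto simp: vec.subspace_def matrix_vector_right_distrib mv_scale)
    have "y j \<in> {v. P m *v v \<in> vec.span (range wv)}" for j
      using vec.span_base[OF rangeI[of wv "(m,j)"]] by (simp add: wv_def)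
    then have "x m \<in> {v. P m *v v \<in> vec.span (range wv)}"
      using ob_span[OF yb sub] by blast
    then show ?thesis by (simp add: P_x)
  qed
  then have "vec.span (range x) \<subseteq> vec.span (range wv)"
    by (intro vec.span_minimal) (auto intro: vec.subspace_span)
  then show ?thesis using xb unfolding ordered_basis_def by auto
qed

lemma w_diag: "C *v tensor (wv p) (wv p') = lam (fst p) (snd p') *s tensor (wv p') (wv p)"
proof -
  have "C *v tensor (wv p) (wv p') = tensor (g (fst p) *v wv p') (wv p)"
    using P_W unfolding wv_def by blast
  then show ?thesis by (simp add: w_eig tensor_scale_left)
qed

lemma hard_dir: "diagonalizable_braiding C"
proof -
  obtain b :: "'n \<Rightarrow> complex^'n" where b: "ordered_basis b" "range b \<subseteq> range wv"
    using extract_basis[OF w_span] by blast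
  have "\<forall>i. \<exists>p. b i = wv p" using b(2) by blast
  then obtain pi where pi: "\<forall>i. b i = wv (pi i)" by metis
  have "\<forall>i j. C *v tensor (b i) (b j) = lam (fst (pi i)) (snd (pi j)) *s tensor (b j) (b i)"
    using pi w_diag by simp
  then have "diagonal_type_wrt C b" unfolding diagonal_type_wrt_def
    by (intro exI[of _ "\<lambda>i j. lam (fst (pi i)) (snd (pi j))"])
  then show ?thesis unfolding diagonalizable_braiding_def using b(1) by blast
qed

end


theorem lemma3p2:
  fixes C :: "complex^('n::finite\<times>'n)^('n\<times>'n)"
  assumes "braided C"
  shows "(left_group_type C \<and> right_group_type C) \<longleftrightarrow> diagonalizable_braiding C"
proof
  assume "left_group_type C \<and> right_group_type C"
  then obtain x g y h where "ordered_basis x" "\<forall>i. invertible (g i :: complex^'n^'n)"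
      "\<forall>i z. C *v tensor (x i) z = tensor (g i *v z) (x i)"
      "ordered_basis y" "\<forall>j z. C *v tensor z (y j) = tensor (y j) ((h j :: complex^'n^'n) *v z)"
    unfolding left_group_type_def right_group_type_def by blast
  then show "diagonalizable_braiding C" using hard_dir[OF assms] by blast
next
  assume "diagonalizable_braiding C"
  then obtain x q where "ordered_basis x" "\<forall>i j. C *v tensor (x i) (x j) = q i j *s tensor (x j) (x i)"
    unfolding diagonalizable_braiding_def diagonal_type_wrt_def by blast
  moreover have "invertible C" using assms unfolding braided_def by blast
  ultimately show "left_group_type C \<and> right_group_type C"
    using diag_imp_left diag_imp_right by blast
qed

end
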